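(* Let $M,N\in\mathbb{S}^{q+r}$. If there exists a real $\alpha\ge 0$ such that $M-\alpha N\ge 0$, then $\mathcal{Z}_r(N)\subseteq\mathcal{Z}_r(M)$. Moreover, if $N\in\boldsymbol{\Pi}_{q,r}$ and $N$ has at least one positive eigenvalue, then $\mathcal{Z}_r(N)\subseteq\mathcal{Z}_r(M)$ if and only if there exists a real $\alpha\ge 0$ such that $M-\alpha N\ge 0$.
   Context: $\mathbb{S}^k$ denotes the real symmetric $k\times k$ matrices; for symmetric matrices, $A\ge 0$ means positive semidefinite. $A^\dagger$ is the Moore–Penrose pseudo-inverse. Any $N\in\mathbb{S}^{q+r}$ is partitioned as $N=\begin{bmatrix}N_{11}&N_{12}\\ N_{21}&N_{22}\end{bmatrix}$ with $N_{11}\in\mathbb{S}^q$, $N_{22}\in\mathbb{S}^r$. The generalized Schur complement is $N\mid N_{22}:=N_{11}-N_{12}N_{22}^\dagger N_{21}$. The set $\boldsymbol{\Pi}_{q,r}$ consists of all $N\in\mathbb{S}^{q+r}$ with $N_{22}\le 0$, $N\mid N_{22}\ge 0$ and $\ker N_{22}\subseteq\ker N_{12}$. Define $\mathcal{Z}_r(\Pi)=\{Z\in\mathbb{R}^{r\times q}:\begin{bmatrix}I_q\\ Z\end{bmatrix}^\top\Pi\begin{bmatrix}I_q\\ Z\end{bmatrix}\ge 0\}$. *)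

theory Defs
  imports "HOL-Analysis.Analysis"
begin

text \<open>Matrices in S^{q+r} are modelled as real^('q+'r)^('q+'r); the first q
coordinates are Inl i, the last r coordinates are Inr j.\<close>

definition sym_mat :: "real^'n^'n \<Rightarrow> bool" where
  "sym_mat A \<longleftrightarrow> transpose A = A"

definition psd :: "real^'n^'n \<Rightarrow> bool" where
  "psd A \<longleftrightarrow> sym_mat A \<and> (\<forall>x. 0 \<le> x \<bullet> (A *v x))"

definition nsd :: "real^'n^'n \<Rightarrow> bool" where
  "nsd A \<longleftrightarrow> sym_mat A \<and> (\<forall>x. x \<bullet> (A *v x) \<le> 0)"

text \<open>Moore-Penrose pseudo-inverse via the four Penrose conditions.\<close>
definition pinv :: "real^'n^'m \<Rightarrow> real^'m^'n" where
  "pinv A = (THE X. A ** X ** A = A \<and> X ** A ** X = X \<and>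
                    transpose (A ** X) = A ** X \<and> transpose (X ** A) = X ** A)"

definition mker :: "real^'n^'m \<Rightarrow> (real^'n) set" where
  "mker A = {x. A *v x = 0}"

definition blk11 :: "real^('q::finite+'r::finite)^('q+'r) \<Rightarrow> real^'q^'q" where
  "blk11 N = (\<chi> i j. N $ Inl i $ Inl j)"
definition blk12 :: "real^('q::finite+'r::finite)^('q+'r) \<Rightarrow> real^'r^'q" where
  "blk12 N = (\<chi> i j. N $ Inl i $ Inr j)"
definition blk21 :: "real^('q::finite+'r::finite)^('q+'r) \<Rightarrow> real^'q^'r" where
  "blk21 N = (\<chi> i j. N $ Inr i $ Inl j)"
definition blk22 :: "real^('q::finite+'r::finite)^('q+'r) \<Rightarrow> real^'r^'r" where
  "blk22 N = (\<chi> i j. N $ Inr i $ Inr j)"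

text \<open>Generalized Schur complement N | N22.\<close>
definition schur :: "real^('q::finite+'r::finite)^('q+'r) \<Rightarrow> real^'q^'q" where
  "schur N = blk11 N - blk12 N ** pinv (blk22 N) ** blk21 N"

definition PiSet :: "(real^('q::finite+'r::finite)^('q+'r)) set" where
  "PiSet = {N. sym_mat N \<and> nsd (blk22 N) \<and> psd (schur N) \<and> mker (blk22 N) \<subseteq> mker (blk12 N)}"

text \<open>The (q+r) x q matrix [I; Z].\<close>
definition stackI :: "real^'q::finite^'r::finite \<Rightarrow> real^'q^('q+'r)" where
  "stackI Z = (\<chi> i j. case i of Inl a \<Rightarrow> (if a = j then 1 else 0) | Inr b \<Rightarrow> Z $ b $ j)"

definition Zr :: "real^('q::finite+'r::finite)^('q+'r) \<Rightarrow> (real^'q^'r) set" where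
  "Zr P = {Z. psd (transpose (stackI Z) ** P ** stackI Z)}"

definition has_pos_eigenvalue :: "real^'n^'n \<Rightarrow> bool" where
  "has_pos_eigenvalue A \<longleftrightarrow> (\<exists>c>0. \<exists>v. v \<noteq> 0 \<and> A *v v = c *\<^sub>R v)"

end

theory Submission
  imports Defs
begin


lemma inner_mv_transpose: "x \<bullet> ((A::real^'n^'m) *v y) = (transpose A *v x) \<bullet> y"
  by (simp add: dot_lmul_matrix)

lemma sym_inner: "sym_mat A \<Longrightarrow> x \<bullet> ((A::real^'n^'n) *v y) = (A *v x) \<bullet> y"
  by (metis inner_mv_transpose sym_mat_def)

lemma sym_by_inner:
  assumes "\<And>x y. ((A::real^'n^'n) *v x) \<bullet> y = x \<bullet> (A *v y)"
  shows "transpose A = A"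
proof -
  have "\<forall>y. transpose A *v y = A *v y"
  proof
    fix y
    have "x \<bullet> (transpose A *v y) = x \<bullet> (A *v y)" for x
      using assms[of x y] inner_mv_transpose[of x "transpose A" y] by simp
    then have "\<forall>x. x \<bullet> (transpose A *v y - A *v y) = 0"
      by (simp add: inner_diff_right)
    then show "transpose A *v y = A *v y"
      by (metis eq_iff_diff_eq_0 inner_eq_zero_iff)
  qed
  then show ?thesis by (simp add: matrix_eq)
qed

definition penrose :: "real^'n^'m \<Rightarrow> real^'m^'n \<Rightarrow> bool" where
  "penrose A X \<longleftrightarrow> A ** X ** A = A \<and> X ** A ** X = X \<and>
                    transpose (A ** X) = A ** X \<and> transpose (X ** A) = X ** A"

lemma penrose_unique:
  assumes "penrose A X" "penrose A Y"
  shows "X = Y"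
proof -
  have a1: "A ** X ** A = A" "X ** A ** X = X" "transpose (A ** X) = A ** X" "transpose (X ** A) = X ** A"
    using assms(1) by (auto simp: penrose_def)
  have b1: "A ** Y ** A = A" "Y ** A ** Y = Y" "transpose (A ** Y) = A ** Y" "transpose (Y ** A) = Y ** A"
    using assms(2) by (auto simp: penrose_def)
  have "X = X ** (A ** X)" using a1 by (simp add: matrix_mul_assoc)
  also have "\<dots> = X ** transpose X ** transpose A" using a1(3)
    by (metis matrix_mul_assoc matrix_transpose_mul)
  also have "\<dots> = X ** transpose X ** transpose (A ** Y ** A)" using b1 by simp
  also have "\<dots> = X ** transpose (A ** X) ** transpose (A ** Y)"
    by (simp add: matrix_transpose_mul matrix_mul_assoc)
  also have "\<dots> = X ** A ** X ** A ** Y" using a1 b1 by (simp add: matrix_mul_assoc)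
  also have "\<dots> = X ** A ** Y" using a1 by (simp add: matrix_mul_assoc)
  finally have X: "X = X ** A ** Y" .
  have "Y = (Y ** A) ** Y" using b1 by simp
  also have "\<dots> = transpose A ** transpose Y ** Y" using b1(4)
    by (metis matrix_transpose_mul)
  also have "\<dots> = transpose (A ** X ** A) ** transpose Y ** Y" using a1 by simp
  also have "\<dots> = transpose (X ** A) ** transpose (Y ** A) ** Y"
    by (simp add: matrix_transpose_mul matrix_mul_assoc)
  also have "\<dots> = X ** A ** Y ** A ** Y" using a1 b1 by (simp add: matrix_mul_assoc)
  also have "\<dots> = X ** A ** Y" using b1 by (metis matrix_mul_assoc)
  finally show ?thesis using X by simp
qed

lemma sym_kernel_orth:
  assumes "sym_mat (D::real^'n^'n)" "D *v z = 0"
  shows "(D *v w) \<bullet> z = 0"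
  using assms by (metis sym_inner inner_zero_right)

lemma penrose_exists_sym:
  fixes D :: "real^'n^'n"
  assumes sD: "sym_mat D"
  shows "\<exists>X. penrose D X"
proof -
  define V where "V = range ((*v) D)"
  have subV: "subspace V" unfolding V_def
    by (simp add: real_vector.linear_subspace_image)
  have decomp: "\<exists>y z. x = y + z \<and> y \<in> V \<and> D *v z = 0" for x
  proof -
    obtain y z where y: "y \<in> span V" and z: "\<And>w. w \<in> span V \<Longrightarrow> orthogonal z w" and xyz: "x = y + z"
      using orthogonal_subspace_decomp_exists[of V x] by blast
    have "D *v (D *v z) \<in> span V" unfolding V_def by (simp add: span_base)
    then have "z \<bullet> (D *v (D *v z)) = 0" using z by (simp add: orthogonal_def)
    then have "(D *v z) \<bullet> (D *v z) = 0" using sym_inner[OF sD, of z "D *v z"] by simp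
    then have "D *v z = 0" by simp
    moreover have "y \<in> V" using y subV by (metis span_eq_iff)
    ultimately show ?thesis using xyz by blast
  qed
  have injV: "y = 0" if yV: "y \<in> V" and Dy: "D *v y = 0" for y
  proof -
    obtain w where w: "y = D *v w" using yV V_def by auto
    have "y \<bullet> y = 0" using w sym_kernel_orth[OF sD Dy] by simp
    then show ?thesis by simp
  qed
  have inj: "inj_on ((*v) D) V"
  proof (rule inj_onI)
    fix a b assume "a \<in> V" "b \<in> V" "D *v a = D *v b"
    then have "a - b \<in> V" "D *v (a - b) = 0"
      using subV by (auto simp: subspace_diff matrix_vector_mult_diff_distrib)
    then show "a = b" using injV by (metis eq_iff_diff_eq_0)
  qed
  obtain g where gV: "range g \<subseteq> V" and lg: "linear g" and gD: "\<And>v. v \<in> V \<Longrightarrow> g (D *v v) = v"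
    using linear_exists_left_inverse_on[OF matrix_vector_mul_linear subV inj] by blast
  have Dg: "D *v g y = y" if yV: "y \<in> V" for y
  proof -
    obtain w where "y = D *v w" using yV V_def by auto
    obtain y' z' where "w = y' + z'" "y' \<in> V" "D *v z' = 0" using decomp by blast
    then have "y = D *v y'" using \<open>y = D *v w\<close> by (simp add: matrix_vector_right_distrib)
    then show ?thesis using gD \<open>y' \<in> V\<close> by simp
  qed
  have DV: "D *v x \<in> V" for x unfolding V_def by simp
  define X where "X = matrix (\<lambda>x. g (g (D *v x)))"
  have lin: "linear (\<lambda>x. g (g (D *v x)))"
  proof -
    have "linear (g \<circ> (g \<circ> (*v) D))"
      by (intro linear_compose lg matrix_vector_mul_linear)
    then show ?thesis by (simp add: o_def)
  qed
  have Xv: "X *v x = g (g (D *v x))" for x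
    unfolding X_def using lin by (simp add: matrix_works linear_matrix_vector_mul_eq)
  have key: "(D ** X) *v x = y \<and> (X ** D) *v x = y" if "x = y + z" "y \<in> V" "D *v z = 0" for x y z
  proof -
    have Dx: "D *v x = D *v y" using that by (simp add: matrix_vector_right_distrib)
    have "(D ** X) *v x = D *v (g (g (D *v y)))" using Dx Xv by (simp add: matrix_vector_mul_assoc[symmetric])
    also have "\<dots> = y" using gD[OF that(2)] Dg that(2) by simp
    finally have 1: "(D ** X) *v x = y" .
    have "(X ** D) *v x = g (g (D *v (D *v y)))" using Dx Xv by (simp add: matrix_vector_mul_assoc[symmetric])
    also have "\<dots> = y" using gD[OF DV] gD[OF that(2)] by simp
    finally show ?thesis using 1 by simp
  qed
  have DX_XD: "D ** X = X ** D"
    unfolding matrix_eq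
  proof
    fix x
    obtain y z where 1: "x = y + z" "y \<in> V" "D *v z = 0" using decomp by blast
    show "(D ** X) *v x = (X ** D) *v x" using key[OF 1] by simp
  qed
  have symDX: "transpose (D ** X) = D ** X"
  proof (rule sym_by_inner)
    fix x x'
    obtain y z where 1: "x = y + z" "y \<in> V" "D *v z = 0" using decomp by blast
    obtain y' z' where 2: "x' = y' + z'" "y' \<in> V" "D *v z' = 0" using decomp by blast
    have o1: "y \<bullet> z' = 0" using 1(2) sym_kernel_orth[OF sD 2(3)] V_def by auto
    have o2: "z \<bullet> y' = 0" using 2(2) sym_kernel_orth[OF sD 1(3)] V_def by (auto simp: inner_commute)
    show "((D ** X) *v x) \<bullet> x' = x \<bullet> ((D ** X) *v x')"
      using key[OF 1] key[OF 2] o1 o2 1(1) 2(1) by (simp add: inner_add_left inner_add_right)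
  qed
  have DXD: "D ** X ** D = D"
    unfolding matrix_eq
  proof
    fix x
    obtain y z where 1: "x = y + z" "y \<in> V" "D *v z = 0" using decomp by blast
    have "(D ** X ** D) *v x = D *v ((X ** D) *v x)" by (simp add: matrix_vector_mul_assoc matrix_mul_assoc)
    also have "\<dots> = D *v y" using key[OF 1] by simp
    also have "\<dots> = D *v x" using 1 by (simp add: matrix_vector_right_distrib)
    finally show "(D ** X ** D) *v x = D *v x" .
  qed
  have XDX: "X ** D ** X = X"
    unfolding matrix_eq
  proof
    fix x
    have gv: "X *v x \<in> V" using Xv gV by auto
    have "(X ** D ** X) *v x = (X ** D) *v (X *v x)" by (simp add: matrix_vector_mul_assoc)
    also have "\<dots> = X *v x" using key[of "X *v x" "X *v x" 0] gv by simp
    finally show "(X ** D ** X) *v x = X *v x" .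
  qed
  have "transpose (X ** D) = X ** D" using symDX DX_XD by simp
  then have "penrose D X" unfolding penrose_def using DXD XDX symDX by (intro conjI)
  then show ?thesis by (rule exI)
qed

lemma pinv_sym:
  assumes "sym_mat (D::real^'n^'n)"
  shows "penrose D (pinv D)"
proof -
  obtain X where X: "penrose D X" using penrose_exists_sym[OF assms] by blast
  have "pinv D = (THE X. penrose D X)" unfolding pinv_def penrose_def by (rule refl)
  also have "\<dots> = X" by (rule the_equality[where P="\<lambda>X. penrose D X", OF X]) (rule penrose_unique[OF _ X])
  finally have "pinv D = X" .
  then show ?thesis using X by simp
qed



lemma quad_nonneg:
  fixes A B C :: real
  assumes h: "\<And>t. 0 \<le> A + 2*B*t + C*t^2"
  shows "0 \<le> C \<and> B^2 \<le> A*C"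
proof -
  have C: "0 \<le> C"
  proof (rule ccontr)
    assume "\<not> 0 \<le> C"
    then have Cn: "C < 0" by simp
    define t where "t = sqrt ((\<bar>A\<bar>+1)/(-C))"
    have nn: "0 \<le> (\<bar>A\<bar>+1)/(-C)" using Cn by (intro divide_nonneg_pos) auto
    have t2: "t^2 = (\<bar>A\<bar>+1)/(-C)" unfolding t_def using nn by simp
    have "0 \<le> (A + 2*B*t + C*t^2) + (A + 2*B*(-t) + C*(-t)^2)" using h[of t] h[of "-t"] by linarith
    also have "\<dots> = 2*A + 2*C*t^2" by (simp add: power2_eq_square algebra_simps)
    also have "\<dots> = 2*A - 2*(\<bar>A\<bar>+1)" using t2 Cn by simp
    finally show False using abs_ge_self[of A] by (smt (verit))
  qed
  have "B^2 \<le> A*C"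
  proof (cases "C = 0")
    case True
    have "B = 0"
    proof (rule ccontr)
      assume "B \<noteq> 0"
      have "0 \<le> A + 2*B*(-(\<bar>A\<bar>+1)/(2*B))" using h[of "-(\<bar>A\<bar>+1)/(2*B)"] True by simp
      also have "\<dots> = A - (\<bar>A\<bar>+1)" using \<open>B \<noteq> 0\<close> by (simp add: field_simps)
      finally show False by linarith
    qed
    then show ?thesis using True by simp
  next
    case False
    then have Cp: "C > 0" using C by simp
    have "0 \<le> A + 2*B*(-B/C) + C*(-B/C)^2" using h by blast
    also have "\<dots> = (A*C - B^2)/C" using Cp by (simp add: field_simps power2_eq_square)
    finally show ?thesis using Cp by (simp add: zero_le_divide_iff)
  qed
  then show ?thesis using C by simp
qed

lemma two_d:
  fixes a b c p q r :: real
  assumes a: "a > 0" and c: "c < 0"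
    and h: "\<And>t. 0 \<le> a + 2*b*t + c*t^2 \<Longrightarrow> 0 \<le> p + 2*q*t + r*t^2"
  shows "p * c \<le> r * a"
proof -
  define d where "d = sqrt (b^2 - a*c)"
  have dpos: "d > 0" unfolding d_def using a c
    by (smt (verit) mult_pos_neg real_sqrt_gt_zero zero_le_power2)
  have d2: "d^2 = b^2 - a*c" unfolding d_def using a c
    by (smt (verit) mult_pos_neg real_sqrt_pow2 zero_le_power2)
  define t1 where "t1 = (-b + d)/c"
  define t2 where "t2 = (-b - d)/c"
  have r1: "a + 2*b*t1 + c*t1^2 = 0"
  proof -
    have ct: "c*t1 = -b + d" unfolding t1_def using c by simp
    have "c*(a + 2*b*t1 + c*t1^2) = a*c + 2*b*(c*t1) + (c*t1)^2" by (simp add: algebra_simps power2_eq_square)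
    also have "\<dots> = 0" unfolding ct using d2 by (simp add: algebra_simps power2_eq_square)
    finally show ?thesis using c by simp
  qed
  have r2: "a + 2*b*t2 + c*t2^2 = 0"
  proof -
    have ct: "c*t2 = -b - d" unfolding t2_def using c by simp
    have "c*(a + 2*b*t2 + c*t2^2) = a*c + 2*b*(c*t2) + (c*t2)^2" by (simp add: algebra_simps power2_eq_square)
    also have "\<dots> = 0" unfolding ct using d2 by (simp add: algebra_simps power2_eq_square)
    finally show ?thesis using c by simp
  qed
  have g1: "0 \<le> p + 2*q*t1 + r*t1^2" using h r1 by simp
  have g2: "0 \<le> p + 2*q*t2 + r*t2^2" using h r2 by simp
  have diff: "t2 - t1 = -2*d/c" unfolding t1_def t2_def using c by (simp add: field_simps)
  have dpos': "t2 - t1 > 0" using diff dpos c by (simp add: divide_pos_neg)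
  have prod: "t1 * t2 = a / c"
  proof -
    have "c*(c*(t1*t2)) = (c*t1)*(c*t2)" by simp
    also have "\<dots> = (-b + d)*(-b - d)" unfolding t1_def t2_def using c by simp
    also have "\<dots> = b^2 - d^2" by (simp add: algebra_simps power2_eq_square)
    also have "\<dots> = c * a" using d2 by simp
    finally have "c*(t1*t2) = a" using c by simp
    then show ?thesis using c by (simp add: field_simps)
  qed
  have t1n: "t1 < 0" and t2p: "t2 > 0"
  proof -
    have "t1 * t2 < 0" using prod a c by (simp add: divide_pos_neg)
    then show "t1 < 0" "t2 > 0" using dpos' by (auto simp: mult_less_0_iff)
  qed
  have "0 \<le> t2 * (p + 2*q*t1 + r*t1^2) + (-t1) * (p + 2*q*t2 + r*t2^2)"
    using mult_nonneg_nonneg[OF _ g1, of t2] mult_nonneg_nonneg[OF _ g2, of "-t1"] t1n t2p by linarith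
  also have "\<dots> = (t2 - t1) * (p - r * (t1*t2))" by (simp add: algebra_simps power2_eq_square)
  finally have "0 \<le> p - r * (a/c)" using dpos' prod by (simp add: zero_le_mult_iff)
  then have "0 \<le> (p - r*(a/c)) * (-c)" using c by (intro mult_nonneg_nonneg) auto
  also have "\<dots> = r*a - p*c" using c by (simp add: field_simps)
  finally show ?thesis by simp
qed


lemma transpose_diff: "transpose ((A::real^'n^'m) - B) = transpose A - transpose B"
  by (simp add: transpose_def vec_eq_iff)

lemma sym_diff_scale:
  assumes "sym_mat (A::real^'n^'n)" "sym_mat B"
  shows "sym_mat (B - c *\<^sub>R A)"
  using assms by (simp add: sym_mat_def transpose_diff transpose_scalar)

lemma scaleR_mv: "((c::real) *\<^sub>R (A::real^'n^'m)) *v v = c *\<^sub>R (A *v v)"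
  by (simp add: matrix_vector_mult_def vec_eq_iff sum_distrib_left mult.assoc)

lemma quad_expand:
  assumes "sym_mat (A::real^'n^'n)"
  shows "(u + t *\<^sub>R v) \<bullet> (A *v (u + t *\<^sub>R v)) = u \<bullet> (A *v u) + 2*(u \<bullet> (A *v v))*t + (v \<bullet> (A *v v))*t^2"
proof -
  have "v \<bullet> (A *v u) = u \<bullet> (A *v v)" using sym_inner[OF assms, of v u] by (simp add: inner_commute)
  then show ?thesis
    by (simp add: matrix_vector_right_distrib matrix_vector_mult_scaleR inner_add_left inner_add_right
        algebra_simps power2_eq_square)
qed

lemma S_lemma:
  fixes A B :: "real^'n^'n"
  assumes sA: "sym_mat A" and sB: "sym_mat B" and v0: "v0 \<bullet> (A *v v0) > 0"
    and imp: "\<And>v. 0 \<le> v \<bullet> (A *v v) \<Longrightarrow> 0 \<le> v \<bullet> (B *v v)"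
  shows "\<exists>\<alpha>\<ge>0. psd (B - \<alpha> *\<^sub>R A)"
proof -
  define R where "R = {v \<bullet> (B *v v) / (v \<bullet> (A *v v)) | v. v \<bullet> (A *v v) > 0}"
  have Rne: "R \<noteq> {}" using v0 unfolding R_def by blast
  have Rpos: "\<forall>x\<in>R. 0 \<le> x" unfolding R_def using imp by (auto intro: divide_nonneg_pos)
  have bdd: "bdd_below R" using Rpos by (auto simp: bdd_below_def)
  define \<alpha> where "\<alpha> = Inf R"
  have a0: "0 \<le> \<alpha>" unfolding \<alpha>_def using Rne Rpos by (intro cInf_greatest) auto
  have low: "\<alpha> \<le> v \<bullet> (B *v v) / (v \<bullet> (A *v v))" if "v \<bullet> (A *v v) > 0" for v
    unfolding \<alpha>_def using bdd that by (intro cInf_lower) (auto simp: R_def)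
  have high: "v \<bullet> (B *v v) / (v \<bullet> (A *v v)) \<le> \<alpha>" if vn: "v \<bullet> (A *v v) < 0" for v
    unfolding \<alpha>_def
  proof (rule cInf_greatest[OF Rne])
    fix x assume "x \<in> R"
    then obtain u where x: "x = u \<bullet> (B *v u) / (u \<bullet> (A *v u))" and up: "u \<bullet> (A *v u) > 0"
      unfolding R_def by blast
    have "(u \<bullet> (B *v u)) * (v \<bullet> (A *v v)) \<le> (v \<bullet> (B *v v)) * (u \<bullet> (A *v u))"
    proof (rule two_d[OF up vn])
      fix t :: real
      assume "0 \<le> u \<bullet> (A *v u) + 2 * (u \<bullet> (A *v v)) * t + v \<bullet> (A *v v) * t^2"
      then have "0 \<le> (u + t *\<^sub>R v) \<bullet> (A *v (u + t *\<^sub>R v))" using quad_expand[OF sA] by simp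
      then have "0 \<le> (u + t *\<^sub>R v) \<bullet> (B *v (u + t *\<^sub>R v))" by (rule imp)
      then show "0 \<le> u \<bullet> (B *v u) + 2 * (u \<bullet> (B *v v)) * t + v \<bullet> (B *v v) * t^2"
        using quad_expand[OF sB] by simp
    qed
    then show "v \<bullet> (B *v v) / (v \<bullet> (A *v v)) \<le> x" unfolding x using up vn
      by (simp add: field_simps)
  qed
  have "psd (B - \<alpha> *\<^sub>R A)"
    unfolding psd_def
  proof (intro conjI allI)
    show "sym_mat (B - \<alpha> *\<^sub>R A)" using sA sB by (rule sym_diff_scale)
    fix v
    have "\<alpha> * (v \<bullet> (A *v v)) \<le> v \<bullet> (B *v v)"
    proof (cases "v \<bullet> (A *v v)" "0::real" rule: linorder_cases)
      case less
      then show ?thesis using high[OF less] by (simp add: divide_le_eq mult.commute)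
    next
      case equal
      then show ?thesis using imp[of v] by simp
    next
      case greater
      then show ?thesis using low[OF greater] by (simp add: le_divide_eq mult.commute)
    qed
    then show "0 \<le> v \<bullet> ((B - \<alpha> *\<^sub>R A) *v v)"
      by (simp add: matrix_vector_mult_diff_rdistrib inner_diff_right scaleR_mv)
  qed
  then show ?thesis using a0 by blast
qed



definition join :: "real^'q::finite \<Rightarrow> real^'r::finite \<Rightarrow> real^('q+'r)" where
  "join x y = (\<chi> i. case i of Inl a \<Rightarrow> x$a | Inr b \<Rightarrow> y$b)"

lemma sum_Plus_UNIV: "(\<Sum>i\<in>(UNIV::('a::finite+'b::finite) set). f i) = (\<Sum>a\<in>UNIV. f (Inl a)) + (\<Sum>b\<in>UNIV. f (Inr b))"
  using sum.Plus[of "UNIV::'a set" "UNIV::'b set" f] by (simp add: o_def)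

lemma join_Inl[simp]: "join x y $ Inl a = x $ a" and join_Inr[simp]: "join x y $ Inr b = y $ b"
  by (simp_all add: join_def)

lemma join_split: "v = join (\<chi> a. v $ Inl a) (\<chi> b. v $ Inr b)"
  by (simp add: vec_eq_iff join_def split: sum.split)

lemma join_add: "join (x + x') (y + y') = join x y + join x' y'"
  by (simp add: vec_eq_iff join_def split: sum.split)

lemma join_scale: "join (c *\<^sub>R x) (c *\<^sub>R y) = c *\<^sub>R join x y"
  by (simp add: vec_eq_iff join_def split: sum.split)

lemma mv_join_Inl: "(N *v join x y) $ Inl a = (blk11 N *v x) $ a + (blk12 N *v y) $ a"
  by (simp add: matrix_vector_mult_def sum_Plus_UNIV blk11_def blk12_def)

lemma mv_join_Inr: "(N *v join x y) $ Inr b = (blk21 N *v x) $ b + (blk22 N *v y) $ b"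
  by (simp add: matrix_vector_mult_def sum_Plus_UNIV blk21_def blk22_def)

lemma inner_join: "join x y \<bullet> v = x \<bullet> (\<chi> a. v $ Inl a) + y \<bullet> (\<chi> b. v $ Inr b)"
  by (simp add: inner_vec_def sum_Plus_UNIV)

lemma qf_join: "join x y \<bullet> (N *v join x y) =
   x \<bullet> (blk11 N *v x) + x \<bullet> (blk12 N *v y) + y \<bullet> (blk21 N *v x) + y \<bullet> (blk22 N *v y)"
proof -
  have 1: "(\<chi> a. (N *v join x y) $ Inl a) = blk11 N *v x + blk12 N *v y"
    by (simp add: vec_eq_iff mv_join_Inl)
  have 2: "(\<chi> b. (N *v join x y) $ Inr b) = blk21 N *v x + blk22 N *v y"
    by (simp add: vec_eq_iff mv_join_Inr)
  show ?thesis unfolding inner_join 1 2 by (simp add: inner_add_right)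
qed

lemma if01_mult: "(if P then 1 else 0) * (y::real) = (if P then y else 0)"
  by simp

lemma stackI_mv: "stackI Z *v x = join x (Z *v x)"
  by (simp add: vec_eq_iff matrix_vector_mult_def stackI_def join_def if01_mult
      split: sum.split)

lemma transpose_blk12: "sym_mat N \<Longrightarrow> transpose (blk12 N) = blk21 N"
  unfolding sym_mat_def by (simp add: vec_eq_iff transpose_def blk12_def blk21_def)

lemma Zr_iff:
  assumes sP: "sym_mat P"
  shows "Z \<in> Zr P \<longleftrightarrow> (\<forall>x. 0 \<le> join x (Z *v x) \<bullet> (P *v join x (Z *v x)))"
proof -
  have sym: "sym_mat (transpose (stackI Z) ** P ** stackI Z)"
    using sP unfolding sym_mat_def by (simp add: matrix_transpose_mul matrix_mul_assoc)
  have "x \<bullet> ((transpose (stackI Z) ** P ** stackI Z) *v x) = join x (Z *v x) \<bullet> (P *v join x (Z *v x))" for x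
  proof -
    have "x \<bullet> ((transpose (stackI Z) ** P ** stackI Z) *v x) = x \<bullet> (transpose (stackI Z) *v (P *v (stackI Z *v x)))"
      by (simp add: matrix_vector_mul_assoc matrix_mul_assoc)
    also have "\<dots> = (stackI Z *v x) \<bullet> (P *v (stackI Z *v x))"
      using inner_mv_transpose[of x "transpose (stackI Z)"] by simp
    finally show ?thesis by (simp add: stackI_mv)
  qed
  then show ?thesis unfolding Zr_def psd_def using sym by simp
qed

lemma outer_mv: "(\<chi> i j. w$i * l$j) *v x = (l \<bullet> x) *\<^sub>R (w::real^'m)"
  by (simp add: vec_eq_iff matrix_vector_mult_def inner_vec_def sum_distrib_left mult_ac)

lemma sym_blk22: "sym_mat N \<Longrightarrow> sym_mat (blk22 N)"
  unfolding sym_mat_def by (simp add: vec_eq_iff transpose_def blk22_def)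

lemma schur_mv: "schur N *v x = blk11 N *v x - blk12 N *v (pinv (blk22 N) *v (blk21 N *v x))"
  by (simp add: schur_def matrix_vector_mult_diff_rdistrib matrix_vector_mul_assoc matrix_mul_assoc)

lemma psd_quad: "psd A \<Longrightarrow> 0 \<le> x \<bullet> (A *v x)"
  by (simp add: psd_def)

lemma cauchy_psd:
  assumes "psd (S::real^'n^'n)"
  shows "(x \<bullet> (S *v y))^2 \<le> (x \<bullet> (S *v x)) * (y \<bullet> (S *v y))"
proof -
  have sS: "sym_mat S" using assms by (simp add: psd_def)
  have "0 \<le> x \<bullet> (S *v x) + 2*(x \<bullet> (S *v y))*t + (y \<bullet> (S *v y))*t^2" for t
    using psd_quad[OF assms, of "x + t *\<^sub>R y"] quad_expand[OF sS] by simp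
  then show ?thesis using quad_nonneg by blast
qed

theorem mainTheorem8:
  fixes M N :: "real^('q::finite + 'r::finite)^('q + 'r)"
  assumes "sym_mat M" and "sym_mat N"
  shows "((\<exists>\<alpha>::real. \<alpha> \<ge> 0 \<and> psd (M - \<alpha> *\<^sub>R N)) \<longrightarrow> Zr N \<subseteq> Zr M) \<and>
         (N \<in> PiSet \<and> has_pos_eigenvalue N \<longrightarrow>
            (Zr N \<subseteq> Zr M \<longleftrightarrow> (\<exists>\<alpha>::real. \<alpha> \<ge> 0 \<and> psd (M - \<alpha> *\<^sub>R N))))"
proof -
  note sM = assms(1) and sN = assms(2)
  have easy: "Zr N \<subseteq> Zr M" if ex: "\<exists>\<alpha>::real. \<alpha> \<ge> 0 \<and> psd (M - \<alpha> *\<^sub>R N)"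
  proof
    fix Z assume Z: "Z \<in> Zr N"
    obtain \<alpha> :: real where a0: "\<alpha> \<ge> 0" and ps: "psd (M - \<alpha> *\<^sub>R N)" using ex by blast
    show "Z \<in> Zr M" unfolding Zr_iff[OF sM]
    proof
      fix x
      define v where "v = join x (Z *v x)"
      have "0 \<le> v \<bullet> (N *v v)" using Z unfolding Zr_iff[OF sN] v_def by blast
      moreover have "0 \<le> v \<bullet> ((M - \<alpha> *\<^sub>R N) *v v)" using psd_quad[OF ps] .
      moreover have "v \<bullet> ((M - \<alpha> *\<^sub>R N) *v v) = v \<bullet> (M *v v) - \<alpha> * (v \<bullet> (N *v v))"
        by (simp add: matrix_vector_mult_diff_rdistrib inner_diff_right scaleR_mv)
      ultimately have "0 \<le> v \<bullet> (M *v v)"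
        using a0 mult_nonneg_nonneg[OF a0, of "v \<bullet> (N *v v)"] by linarith
      then show "0 \<le> join x (Z *v x) \<bullet> (M *v join x (Z *v x))" unfolding v_def .
    qed
  qed
  have hard: "\<exists>\<alpha>::real. \<alpha> \<ge> 0 \<and> psd (M - \<alpha> *\<^sub>R N)"
    if Pi: "N \<in> PiSet" and pe: "has_pos_eigenvalue N" and incl: "Zr N \<subseteq> Zr M"
  proof -
    define D where "D = blk22 N"
    define X where "X = pinv D"
    define S where "S = schur N"
    define Y where "Y = X ** blk21 N"
    have sD: "sym_mat D" unfolding D_def using sN by (rule sym_blk22)
    have nsdD: "\<And>w. w \<bullet> (D *v w) \<le> 0" using Pi unfolding PiSet_def nsd_def D_def by blast
    have psdS: "psd S" using Pi unfolding PiSet_def S_def by blast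
    have ker: "\<And>u. D *v u = 0 \<Longrightarrow> blk12 N *v u = 0"
      using Pi unfolding PiSet_def mker_def D_def by blast
    have pen: "penrose D X" unfolding X_def using sD by (rule pinv_sym)
    have DXD: "D ** X ** D = D" and symDX: "transpose (D ** X) = D ** X"
      using pen by (auto simp: penrose_def)
    have t12: "transpose (blk12 N) = blk21 N" using sN by (rule transpose_blk12)
    have key1: "blk21 N *v x = D *v (Y *v x)" for x
    proof -
      define u where "u = blk21 N *v x - D *v (X *v (blk21 N *v x))"
      have DDX: "D ** (D ** X) = D"
      proof -
        have tD: "transpose D = D" using sD by (simp add: sym_mat_def)
        have "D ** (D ** X) = D ** transpose (D ** X)" using symDX by simp
        also have "\<dots> = transpose (D ** X ** D)"
          by (simp add: matrix_transpose_mul tD matrix_mul_assoc)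
        also have "\<dots> = D" using DXD tD by simp
        finally show ?thesis .
      qed
      have "D *v u = D *v (blk21 N *v x) - (D ** (D ** X)) *v (blk21 N *v x)"
        unfolding u_def by (simp add: matrix_vector_mult_diff_distrib matrix_vector_mul_assoc matrix_mul_assoc)
      then have Du: "D *v u = 0" using DDX by simp
      then have N12u: "blk12 N *v u = 0" by (rule ker)
      have DXu: "(D ** X) *v u = 0"
      proof -
        have "(D ** X) *v u = (D ** X) *v (blk21 N *v x) - (D ** X ** D) *v (X *v (blk21 N *v x))"
          unfolding u_def by (simp add: matrix_vector_mult_diff_distrib matrix_vector_mul_assoc matrix_mul_assoc)
        also have "\<dots> = 0" using DXD by (simp add: matrix_vector_mul_assoc matrix_mul_assoc)
        finally show ?thesis .
      qed
      have a: "u \<bullet> (blk21 N *v x) = 0"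
        using inner_mv_transpose[of u "blk21 N" x] t12 N12u
        by (metis inner_zero_left transpose_transpose)
      have b: "u \<bullet> (D *v (X *v (blk21 N *v x))) = 0"
      proof -
        have "u \<bullet> (D *v (X *v (blk21 N *v x))) = u \<bullet> ((D ** X) *v (blk21 N *v x))"
          by (simp add: matrix_vector_mul_assoc matrix_mul_assoc)
        also have "\<dots> = ((D ** X) *v u) \<bullet> (blk21 N *v x)"
          using inner_mv_transpose[of u "D ** X"] symDX by simp
        finally show ?thesis using DXu by simp
      qed
      have "u \<bullet> u = 0"
        using a b by (simp add: u_def inner_diff_right)
      then have "u = 0" by simp
      then show ?thesis unfolding u_def Y_def by (simp add: matrix_vector_mul_assoc)
    qed
    have qid: "join x (w - Y *v x) \<bullet> (N *v join x (w - Y *v x)) = x \<bullet> (S *v x) + w \<bullet> (D *v w)" for x w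
    proof -
      define c where "c = Y *v x"
      have Yc: "X *v (blk21 N *v x) = c" unfolding c_def Y_def by (simp add: matrix_vector_mul_assoc)
      have m12: "x \<bullet> (blk12 N *v z) = (D *v c) \<bullet> z" for z
        using inner_mv_transpose[of x "blk12 N" z] t12 key1[of x] c_def by simp
      have m21: "z \<bullet> (blk21 N *v x) = (D *v c) \<bullet> z" for z
        using key1[of x] c_def by (simp add: inner_commute)
      have Sx: "x \<bullet> (S *v x) = x \<bullet> (blk11 N *v x) - (D *v c) \<bullet> c"
        unfolding S_def schur_mv D_def[symmetric] X_def[symmetric] Yc by (simp add: inner_diff_right m12)
      have e1: "(D *v c) \<bullet> w = c \<bullet> (D *v w)" using sym_inner[OF sD, of c w] by simp
      have e2: "w \<bullet> (D *v c) = c \<bullet> (D *v w)" using sym_inner[OF sD, of w c] e1 by (simp add: inner_commute)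
      have e3: "(D *v c) \<bullet> c = c \<bullet> (D *v c)" by (simp add: inner_commute)
      show ?thesis
        unfolding qf_join m12 m21 Sx c_def[symmetric] D_def[symmetric]
        by (simp add: inner_diff_left inner_diff_right matrix_vector_mult_diff_distrib e1 e2 e3)
    qed
    have memb: "(\<chi> i j. w$i * l$j) - Y \<in> Zr N"
      if bnd: "\<And>x'. 0 \<le> x' \<bullet> (S *v x') + (l \<bullet> x')^2 * (w \<bullet> (D *v w))" for w l
      unfolding Zr_iff[OF sN]
    proof
      fix x'
      have "((\<chi> i j. w$i * l$j) - Y) *v x' = (l \<bullet> x') *\<^sub>R w - Y *v x'"
        by (simp add: matrix_vector_mult_diff_rdistrib outer_mv)
      then show "0 \<le> join x' (((\<chi> i j. w$i * l$j) - Y) *v x') \<bullet> (N *v join x' (((\<chi> i j. w$i * l$j) - Y) *v x'))"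
        using qid[of x' "(l \<bullet> x') *\<^sub>R w"] bnd[of x']
        by (simp add: matrix_vector_mult_scaleR power2_eq_square mult_ac)
    qed
    have claim: "0 \<le> v \<bullet> (M *v v)" if vN: "0 \<le> v \<bullet> (N *v v)" for v
    proof -
      define x where "x = (\<chi> a. v $ Inl a)"
      define y where "y = (\<chi> b. v $ Inr b)"
      have vj: "v = join x y" unfolding x_def y_def by (rule join_split)
      define w where "w = y + Y *v x"
      have yw: "y = w - Y *v x" unfolding w_def by simp
      have h0: "0 \<le> x \<bullet> (S *v x) + w \<bullet> (D *v w)" using vN unfolding vj yw qid .
      show ?thesis
      proof (cases "x = 0")
        case False
        have "\<exists>l. l \<bullet> x = 1 \<and> (\<forall>x'. 0 \<le> x' \<bullet> (S *v x') + (l \<bullet> x')^2 * (w \<bullet> (D *v w)))"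
        proof (cases "x \<bullet> (S *v x) > 0")
          case True
          define \<sigma> where "\<sigma> = x \<bullet> (S *v x)"
          have sS: "sym_mat S" using psdS by (simp add: psd_def)
          define l where "l = (1/\<sigma>) *\<^sub>R (S *v x)"
          have lx: "l \<bullet> x' = (x \<bullet> (S *v x')) / \<sigma>" for x'
            unfolding l_def using sym_inner[OF sS, of x x'] by simp
          show ?thesis
          proof (intro exI conjI allI)
            show "l \<bullet> x = 1" using True unfolding lx \<sigma>_def by simp
            fix x'
            define B where "B = x \<bullet> (S *v x')"
            define C where "C = x' \<bullet> (S *v x')"
            define \<delta> where "\<delta> = w \<bullet> (D *v w)"
            have cs: "B^2 \<le> \<sigma> * C" unfolding B_def C_def \<sigma>_def by (rule cauchy_psd[OF psdS])
            have sp: "\<sigma> > 0" using True \<sigma>_def by simp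
            have hd: "0 \<le> \<sigma> + \<delta>" using h0 \<sigma>_def \<delta>_def by simp
            have t2: "(B/\<sigma>)^2 * \<sigma> \<le> C"
            proof -
              have "(B/\<sigma>)^2 * \<sigma> = B^2 / \<sigma>" using sp by (simp add: power2_eq_square field_simps)
              also have "\<dots> \<le> C" using cs sp by (simp add: divide_le_eq mult.commute)
              finally show ?thesis .
            qed
            have "0 \<le> (B/\<sigma>)^2 * (\<sigma> + \<delta>)" using hd by simp
            then show "0 \<le> x' \<bullet> (S *v x') + (l \<bullet> x')^2 * (w \<bullet> (D *v w))"
              unfolding lx B_def[symmetric] C_def[symmetric] \<delta>_def[symmetric] using t2
              by (simp add: algebra_simps)
          qed
        next
          case False
          have sx0: "x \<bullet> (S *v x) = 0" using False psd_quad[OF psdS, of x] by simp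
          have d0: "w \<bullet> (D *v w) = 0" using h0 sx0 nsdD[of w] by simp
          define l where "l = (1/(x \<bullet> x)) *\<^sub>R x"
          show ?thesis
          proof (intro exI conjI allI)
            show "l \<bullet> x = 1" unfolding l_def using \<open>x \<noteq> 0\<close> by simp
            fix x' show "0 \<le> x' \<bullet> (S *v x') + (l \<bullet> x')^2 * (w \<bullet> (D *v w))"
              using d0 psd_quad[OF psdS, of x'] by simp
          qed
        qed
        then obtain l where l1: "l \<bullet> x = 1"
          and bnd: "\<And>x'. 0 \<le> x' \<bullet> (S *v x') + (l \<bullet> x')^2 * (w \<bullet> (D *v w))" by blast
        have "(\<chi> i j. w$i * l$j) - Y \<in> Zr M" using memb[OF bnd] incl by blast
        then have "0 \<le> join x (((\<chi> i j. w$i * l$j) - Y) *v x) \<bullet> (M *v join x (((\<chi> i j. w$i * l$j) - Y) *v x))"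
          unfolding Zr_iff[OF sM] by blast
        moreover have "((\<chi> i j. w$i * l$j) - Y) *v x = y"
          by (simp add: matrix_vector_mult_diff_rdistrib outer_mv l1 yw)
        ultimately show ?thesis unfolding vj by simp
      next
        case True
        have wy: "w = y" unfolding w_def True by simp
        have d0: "y \<bullet> (D *v y) = 0" using h0 nsdD[of y] True wy by simp
        define u :: "real^'q" where "u = axis undefined 1"
        have uu: "u \<bullet> u = 1" unfolding u_def by simp
        define a where "a = join u (- (Y *v u))"
        define b where "b = join (0::real^'q) y"
        have ineq: "0 \<le> (a + t *\<^sub>R b) \<bullet> (M *v (a + t *\<^sub>R b))" for t
        proof -
          have bnd: "0 \<le> x' \<bullet> (S *v x') + (u \<bullet> x')^2 * ((t *\<^sub>R y) \<bullet> (D *v (t *\<^sub>R y)))" for x'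
            using d0 psd_quad[OF psdS, of x'] by (simp add: matrix_vector_mult_scaleR)
          have "(\<chi> i j. (t *\<^sub>R y)$i * u$j) - Y \<in> Zr M" using memb[OF bnd] incl by blast
          then have "0 \<le> join u (((\<chi> i j. (t *\<^sub>R y)$i * u$j) - Y) *v u) \<bullet> (M *v join u (((\<chi> i j. (t *\<^sub>R y)$i * u$j) - Y) *v u))"
            unfolding Zr_iff[OF sM] by blast
          moreover have "join u (((\<chi> i j. (t *\<^sub>R y)$i * u$j) - Y) *v u) = a + t *\<^sub>R b"
          proof -
            have e: "((\<chi> i j. (t *\<^sub>R y)$i * u$j) - Y) *v u = t *\<^sub>R y - Y *v u"
              using outer_mv[of "t *\<^sub>R y" u u] uu by (simp add: matrix_vector_mult_diff_rdistrib)
            show ?thesis unfolding e a_def b_def by (simp add: vec_eq_iff join_def split: sum.split)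
          qed
          ultimately show ?thesis by simp
        qed
        have "0 \<le> a \<bullet> (M *v a) + 2*(a \<bullet> (M *v b))*t + (b \<bullet> (M *v b))*t^2" for t
          using ineq[of t] quad_expand[OF sM] by simp
        then have "0 \<le> b \<bullet> (M *v b)" using quad_nonneg by blast
        then show ?thesis unfolding vj b_def True .
      qed
    qed
    obtain c v where c: "c > 0" and v: "v \<noteq> 0" and Nv: "N *v v = c *\<^sub>R v"
      using pe unfolding has_pos_eigenvalue_def by blast
    have "v \<bullet> (N *v v) > 0" using c v Nv by simp
    from S_lemma[OF sN sM this claim] show ?thesis by blast
  qed
  show ?thesis using easy hard by blast
qed

end
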